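(* Let $\mathcal{P}$ be a set of mutually commuting Pauli operators on $n$ qubits, and let $r$ be the number of independent generators of $\mathcal{P}$ (the $\mathbb{F}_2$-rank of its tableau). Run the qubitwise diagonalization algorithm described in the context on $\mathcal{P}$, choosing at every stage $\alpha$ a nonzero null vector of symplectic weight at most $r^{(\alpha)}+1$ (i.e. one corresponding to a dependent set of at most $r^{(\alpha)}+1$ columns of the tableau). Then the total number of CNOT gate conjugations in the resulting diagonalizing circuit is at most $nr-\frac{r(r+1)}{2}$.
   Context: A Pauli operator on $m$ qubits is encoded, up to phase, by $u=(\boldsymbol{x},\boldsymbol{z})\in\mathbb{F}_2^{2m}$ via $P=\bigotimes_{j=1}^m X^{x_j}Z^{z_j}$. For a set of Pauli operators, the tableau $(\mathcal{X}\mid\mathcal{Z})$ is the binary matrix whose rows encode the operators. An operator is diagonal on qubit $j$ if its $j$-th tensor factor is $I$ or $Z$. The symplectic weight of $(\boldsymbol{v},\boldsymbol{w})\in\mathbb{F}_2^{2m}$ is $\omega(\boldsymbol{v},\boldsymbol{w})=|\{j: (v_j,w_j)\neq(0,0)\}|$. Qubitwise diagonalization algorithm. Input: a set of mutually commuting Pauli operators on $n$ qubits. At stage $\alpha$: discard the qubits on which all operators are already diagonal; let $n^{(\alpha)}$ be the number of remaining qubits (stop if $n^{(\alpha)}=0$); let $T^{(\alpha)}$ be an independent generating set of the operators restricted to the remaining qubits, of size $r^{(\alpha)}$, and let $M^{(\alpha)}=(\mathcal{X}^{(\alpha)}\mid\mathcal{Z}^{(\alpha)})$ be its $r^{(\alpha)}\times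 2n^{(\alpha)}$ tableau. Choose a nonzero $(\boldsymbol{v},\boldsymbol{w})$ with $M^{(\alpha)}(\boldsymbol{v};\boldsymbol{w})=0$ over $\mathbb{F}_2$, and a qubit $i$ with $(v_i,w_i)\neq(0,0)$. Step 1: for each qubit $j$, if $v_j=0,w_j=1$ conjugate by $\mathrm{H}(j)$; if $v_j=w_j=1$ conjugate by $\mathrm{S}(j)$ then $\mathrm{H}(j)$. Step 2: for each $j\neq i$ with $(v_j,w_j)\neq(0,0)$, conjugate by $\mathrm{CNOT}(j,i)$. After this all operators are diagonal on qubit $i$; then proceed to stage $\alpha+1$. The output circuit is the composition of all gates used. *)

theory Defs
  imports Complex_Main "HOL-Library.Z2"
begin

text \<open>A Pauli operator (up to phase) is encoded by (x, z), with x, z : nat => F_2;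
  qubit j corresponds to coordinate j (qubits of an n-qubit system are 0..<n).\<close>
type_synonym pauli = "(nat \<Rightarrow> bit) \<times> (nat \<Rightarrow> bit)"

definition supported_on :: "nat set \<Rightarrow> pauli \<Rightarrow> bool" where
  "supported_on Q u \<longleftrightarrow> (\<forall>j. j \<notin> Q \<longrightarrow> fst u j = 0 \<and> snd u j = 0)"

text \<open>Symplectic form on n qubits; operators commute iff it vanishes.\<close>
definition symp :: "nat \<Rightarrow> pauli \<Rightarrow> pauli \<Rightarrow> bit" where
  "symp n u u' = (\<Sum>j<n. fst u j * snd u' j + snd u j * fst u' j)"

text \<open>F_2-linear algebra: linear combinations over F_2 are subset sums.\<close>
definition vsum :: "pauli set \<Rightarrow> pauli" where
  "vsum A = (\<lambda>j. \<Sum>u\<in>A. fst u j, \<lambda>j. \<Sum>u\<in>A. snd u j)"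

definition f2_span :: "pauli set \<Rightarrow> pauli set" where
  "f2_span S = {vsum A | A. finite A \<and> A \<subseteq> S}"

definition f2_indep :: "pauli set \<Rightarrow> bool" where
  "f2_indep T \<longleftrightarrow> finite T \<and> (\<forall>A. A \<subseteq> T \<and> A \<noteq> {} \<longrightarrow> vsum A \<noteq> (\<lambda>_. 0, \<lambda>_. 0))"

definition indep_gen_set :: "pauli set \<Rightarrow> pauli set \<Rightarrow> bool" where
  "indep_gen_set T S \<longleftrightarrow> f2_indep T \<and> f2_span T = f2_span S"

definition restrict_to :: "nat set \<Rightarrow> pauli \<Rightarrow> pauli" where
  "restrict_to Q u = (\<lambda>j. if j \<in> Q then fst u j else 0, \<lambda>j. if j \<in> Q then snd u j else 0)"

text \<open>Qubits on which some operator is not diagonal (i.e. has an X-component).\<close>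
definition remaining :: "pauli set \<Rightarrow> nat set" where
  "remaining P = {j. \<exists>u\<in>P. fst u j \<noteq> 0}"

definition symp_weight :: "nat set \<Rightarrow> pauli \<Rightarrow> nat" where
  "symp_weight Q vw = card {j\<in>Q. fst vw j \<noteq> 0 \<or> snd vw j \<noteq> 0}"

definition tableau_null :: "nat set \<Rightarrow> pauli set \<Rightarrow> pauli \<Rightarrow> bool" where
  "tableau_null Q T vw \<longleftrightarrow>
     (\<forall>t\<in>T. (\<Sum>j\<in>Q. fst t j * fst vw j + snd t j * snd vw j) = 0)"

datatype gate = Had nat | Phs nat | CNOT nat nat

text \<open>Conjugation action of gates on Pauli operators (up to phase).
  CNOT c t: X_c -> X_c X_t, Z_t -> Z_c Z_t.\<close>
fun conj_gate :: "gate \<Rightarrow> pauli \<Rightarrow> pauli" where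
  "conj_gate (Had j) (x, z) = (x(j := z j), z(j := x j))"
| "conj_gate (Phs j) (x, z) = (x, z(j := z j + x j))"
| "conj_gate (CNOT c t) (x, z) = (x(t := x t + x c), z(c := z c + z t))"

definition conj_circ :: "gate list \<Rightarrow> pauli \<Rightarrow> pauli" where
  "conj_circ C u = fold conj_gate C u"

definition step1_gates :: "nat set \<Rightarrow> pauli \<Rightarrow> gate list" where
  "step1_gates Q vw = concat (map (\<lambda>j.
      if fst vw j = 0 \<and> snd vw j = 1 then [Had j]
      else if fst vw j = 1 \<and> snd vw j = 1 then [Phs j, Had j] else [])
    (sorted_list_of_set Q))"

definition step2_gates :: "nat set \<Rightarrow> pauli \<Rightarrow> nat \<Rightarrow> gate list" where
  "step2_gates Q vw i = map (\<lambda>j. CNOT j i)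
     (filter (\<lambda>j. j \<noteq> i \<and> (fst vw j \<noteq> 0 \<or> snd vw j \<noteq> 0)) (sorted_list_of_set Q))"

definition stage_circuit :: "nat set \<Rightarrow> pauli \<Rightarrow> nat \<Rightarrow> gate list" where
  "stage_circuit Q vw i = step1_gates Q vw @ step2_gates Q vw i"

inductive qwd_run :: "pauli set \<Rightarrow> gate list \<Rightarrow> bool" where
  stop: "remaining P = {} \<Longrightarrow> qwd_run P []"
| stage: "\<lbrakk> Q = remaining P; Q \<noteq> {};
            \<forall>t\<in>T. supported_on Q t;
            indep_gen_set T (restrict_to Q ` P);
            supported_on Q vw; vw \<noteq> (\<lambda>_. 0, \<lambda>_. 0);
            tableau_null Q T vw;
            symp_weight Q vw \<le> card T + 1;
            i \<in> Q; fst vw i \<noteq> 0 \<or> snd vw i \<noteq> 0;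
            qwd_run (conj_circ (stage_circuit Q vw i) ` P) C \<rbrakk>
         \<Longrightarrow> qwd_run P (stage_circuit Q vw i @ C)"

definition cnot_count :: "gate list \<Rightarrow> nat" where
  "cnot_count C = length (filter (\<lambda>g. case g of CNOT _ _ \<Rightarrow> True | _ \<Rightarrow> False) C)"

end

theory Submission
  imports Defs
begin


declare add_bit_eq_xor[simp del] mult_bit_eq_and[simp del]

definition pzero :: pauli where "pzero = (\<lambda>_. 0, \<lambda>_. 0)"
definition padd :: "pauli \<Rightarrow> pauli \<Rightarrow> pauli" where
  "padd u v = (\<lambda>j. fst u j + fst v j, \<lambda>j. snd u j + snd v j)"

lemma bit_self: "(a::bit) + a = 0" by (cases a) simp_all

lemma bit_sum_symdiff:
  fixes f :: "'a \<Rightarrow> bit"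
  assumes "finite A" "finite B"
  shows "sum f A + sum f B = sum f ((A - B) \<union> (B - A))"
proof -
  have 1: "sum f A = sum f (A \<inter> B) + sum f (A - B)" by (rule sum.Int_Diff) (rule assms)
  have 2: "sum f B = sum f (A \<inter> B) + sum f (B - A)" using assms
    by (metis inf_commute sum.Int_Diff)
  have 3: "sum f ((A - B) \<union> (B - A)) = sum f (A - B) + sum f (B - A)"
    using assms by (intro sum.union_disjoint) auto
  have 4: "\<And>a b c::bit. (c + a) + (c + b) = a + b"
    by (metis add.assoc add.commute add_0 bit_self)
  show ?thesis unfolding 1 2 3 by (rule 4)
qed

lemma vsum_empty[simp]: "vsum {} = pzero" by (simp add: vsum_def pzero_def)
lemma vsum_insert: "finite A \<Longrightarrow> a \<notin> A \<Longrightarrow> vsum (insert a A) = padd a (vsum A)"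
  by (simp add: vsum_def padd_def)
lemma vsum_single[simp]: "vsum {a} = a" by (auto simp: vsum_def fun_eq_iff prod_eq_iff of_bool_def)
lemma padd_self: "padd u u = pzero" by (simp add: padd_def pzero_def bit_self)

lemma vsum_symdiff: "finite A \<Longrightarrow> finite B \<Longrightarrow> padd (vsum A) (vsum B) = vsum ((A - B) \<union> (B - A))"
  unfolding vsum_def padd_def by (simp only: bit_sum_symdiff fst_conv snd_conv)

lemma span_add: assumes "x \<in> f2_span S" "y \<in> f2_span S" shows "padd x y \<in> f2_span S"
proof -
  from assms obtain A B where "finite A" "A \<subseteq> S" "x = vsum A" "finite B" "B \<subseteq> S" "y = vsum B"
    unfolding f2_span_def by blast
  then show ?thesis unfolding f2_span_def
    by (intro CollectI exI[of _ "(A - B) \<union> (B - A)"]) (auto simp: vsum_symdiff)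
qed

lemma span_zero: "pzero \<in> f2_span S"
  unfolding f2_span_def by (intro CollectI exI[of _ "{}"]) auto

lemma span_base: "x \<in> S \<Longrightarrow> x \<in> f2_span S"
  unfolding f2_span_def by (intro CollectI exI[of _ "{x}"]) auto

lemma span_vsum: "finite B \<Longrightarrow> B \<subseteq> f2_span S \<Longrightarrow> vsum B \<in> f2_span S"
  by (induction B rule: finite_induct) (auto simp: vsum_insert span_zero span_add)

lemma span_subset: assumes "A \<subseteq> f2_span S" shows "f2_span A \<subseteq> f2_span S"
proof
  fix y assume "y \<in> f2_span A"
  then obtain B where "finite B" "B \<subseteq> A" "y = vsum B" unfolding f2_span_def by blast
  then show "y \<in> f2_span S" using assms span_vsum by (metis order_trans)
qed

lemma span_mono: "A \<subseteq> S \<Longrightarrow> f2_span A \<subseteq> f2_span S"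
  by (meson span_base span_subset subset_iff)

definition linmap :: "(pauli \<Rightarrow> pauli) \<Rightarrow> bool" where
  "linmap f \<longleftrightarrow> (\<forall>u v. f (padd u v) = padd (f u) (f v)) \<and> f pzero = pzero"

lemma linD: "linmap f \<Longrightarrow> f (padd u v) = padd (f u) (f v)" "linmap f \<Longrightarrow> f pzero = pzero"
  unfolding linmap_def by blast+

lemma lin_vsum_span: assumes "linmap f" "finite A" shows "f (vsum A) \<in> f2_span (f ` A)"
  using assms(2) proof (induction A rule: finite_induct)
  case empty then show ?case using assms(1) by (simp add: linmap_def span_zero)
next
  case (insert a A)
  have "f (vsum A) \<in> f2_span (f ` insert a A)" using insert span_mono[of "f ` A" "f ` insert a A"] by auto
  moreover have "f a \<in> f2_span (f ` insert a A)" by (simp add: span_base)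
  ultimately show ?case using insert linD[OF assms(1)] by (simp add: vsum_insert span_add)
qed

lemma lin_span_image: assumes "linmap f" shows "f ` f2_span S \<subseteq> f2_span (f ` S)"
proof
  fix y assume "y \<in> f ` f2_span S"
  then obtain A where A: "finite A" "A \<subseteq> S" "y = f (vsum A)" unfolding f2_span_def by auto
  have "f (vsum A) \<in> f2_span (f ` A)" by (rule lin_vsum_span[OF assms A(1)])
  moreover have "f2_span (f ` A) \<subseteq> f2_span (f ` S)" using A(2) by (intro span_mono) auto
  ultimately show "y \<in> f2_span (f ` S)" using A(3) by auto
qed

lemma lin_inj_vsum: assumes "linmap f" "inj f" "finite A" shows "f (vsum A) = vsum (f ` A)"
  using assms(3) proof (induction A rule: finite_induct)
  case empty then show ?case using assms by (simp add: linmap_def)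
next
  case (insert a A)
  have "f a \<notin> f ` A" using insert assms by (meson inj_image_mem_iff)
  then show ?case using insert linD[OF assms(1)] by (simp add: vsum_insert)
qed

lemma indep_image: assumes "linmap f" "inj f" "f2_indep T" shows "f2_indep (f ` T)"
  unfolding f2_indep_def
proof (intro conjI allI impI)
  show "finite (f ` T)" using assms(3) by (simp add: f2_indep_def)
  fix A assume A: "A \<subseteq> f ` T \<and> A \<noteq> {}"
  define B where "B = T \<inter> f -` A"
  have AB: "A = f ` B" using A unfolding B_def by auto
  have B: "B \<subseteq> T" "B \<noteq> {}" "finite B" using A AB assms(3) unfolding B_def f2_indep_def
    by (auto intro: finite_subset)
  have "vsum B \<noteq> (\<lambda>_. 0, \<lambda>_. 0)" using assms(3) B unfolding f2_indep_def by auto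
  hence "f (vsum B) \<noteq> f pzero" using assms(2) by (simp add: pzero_def inj_eq)
  then show "vsum A \<noteq> (\<lambda>_. 0, \<lambda>_. 0)"
    using lin_inj_vsum[OF assms(1,2) B(3)] assms(1) AB by (simp add: linmap_def pzero_def)
qed

lemma card_indep_le:
  assumes "f2_indep T" "finite S" "T \<subseteq> f2_span S"
  shows "card T \<le> card S"
proof -
  have fT: "finite T" using assms(1) by (simp add: f2_indep_def)
  have ind: "\<And>A'. A' \<subseteq> T \<Longrightarrow> A' \<noteq> {} \<Longrightarrow> vsum A' \<noteq> pzero"
    using assms(1) by (simp add: f2_indep_def pzero_def)
  have inj: "inj_on vsum (Pow T)"
  proof (rule inj_onI)
    fix A B assume AB: "A \<in> Pow T" "B \<in> Pow T" "vsum A = vsum B"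
    have fin: "finite A" "finite B" using AB(1,2) fT by (auto intro: finite_subset)
    have eq: "vsum ((A - B) \<union> (B - A)) = pzero" using vsum_symdiff[OF fin] AB(3) padd_self by simp
    have "(A - B) \<union> (B - A) = {}"
    proof (rule ccontr)
      assume ne: "(A - B) \<union> (B - A) \<noteq> {}"
      have "(A - B) \<union> (B - A) \<subseteq> T" using AB(1,2) by auto
      from ind[OF this ne] eq show False by simp
    qed
    then show "A = B" by blast
  qed
  have s1: "vsum ` Pow T \<subseteq> f2_span T"
  proof
    fix y assume "y \<in> vsum ` Pow T"
    then obtain A where A: "A \<subseteq> T" "y = vsum A" by auto
    then have "finite A" using fT by (auto intro: finite_subset)
    with A show "y \<in> f2_span T" unfolding f2_span_def by blast
  qed
  have s3: "f2_span S \<subseteq> vsum ` Pow S"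
  proof
    fix y assume "y \<in> f2_span S"
    then obtain A where A: "A \<subseteq> S" "y = vsum A" unfolding f2_span_def by blast
    then show "y \<in> vsum ` Pow S" by blast
  qed
  have "vsum ` Pow T \<subseteq> vsum ` Pow S" using s1 span_subset[OF assms(3)] s3 by blast
  then have "card (vsum ` Pow T) \<le> card (vsum ` Pow S)"
    using assms(2) by (intro card_mono) auto
  also have "\<dots> \<le> card (Pow S)" using assms(2) by (intro card_image_le) auto
  finally have "(2::nat) ^ card T \<le> 2 ^ card S"
    using card_image[OF inj] fT assms(2) by (simp add: card_Pow)
  then show ?thesis by simp
qed



lemma conj_gate_lin: "linmap (conj_gate g)"
proof -
  have a: "conj_gate g (padd u v) = padd (conj_gate g u) (conj_gate g v)" for u v
    by (cases u; cases v; cases g) (auto simp: padd_def fun_eq_iff ac_simps)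
  have b: "conj_gate g pzero = pzero" by (cases g) (auto simp: pzero_def fun_eq_iff)
  show ?thesis using a b by (simp add: linmap_def)
qed

lemma conj_circ_Nil[simp]: "conj_circ [] u = u" by (simp add: conj_circ_def)
lemma conj_circ_Cons[simp]: "conj_circ (g # C) u = conj_circ C (conj_gate g u)" by (simp add: conj_circ_def)
lemma conj_circ_append[simp]: "conj_circ (C @ D) u = conj_circ D (conj_circ C u)" by (simp add: conj_circ_def)

lemma conj_circ_lin: "linmap (conj_circ C)"
proof (induction C)
  case Nil then show ?case by (simp add: linmap_def)
next
  case (Cons g C)
  show ?case unfolding linmap_def
    using linD[OF Cons] linD[OF conj_gate_lin[of g]] by simp
qed

lemma restrict_lin: "linmap (restrict_to Q)"
  by (auto simp: linmap_def restrict_to_def padd_def pzero_def fun_eq_iff)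

fun good :: "gate \<Rightarrow> bool" where
  "good (CNOT c t) = (c \<noteq> t)" | "good _ = True"

lemma good_invol: "good g \<Longrightarrow> conj_gate g (conj_gate g u) = u"
  by (cases u; cases g) (auto simp: fun_eq_iff add.assoc bit_self)

lemma good_inj: "good g \<Longrightarrow> inj (conj_gate g)"
  by (metis good_invol injI)

lemma circ_inj: "\<forall>g\<in>set C. good g \<Longrightarrow> inj (conj_circ C)"
proof (induction C)
  case Nil then show ?case by (simp add: inj_def)
next
  case (Cons g C)
  have "conj_circ (g # C) = conj_circ C \<circ> conj_gate g" by (simp add: fun_eq_iff)
  moreover have "inj (conj_circ C \<circ> conj_gate g)" using Cons good_inj by (intro inj_compose) auto
  ultimately show ?case by metis
qed

fun gate_in :: "nat set \<Rightarrow> gate \<Rightarrow> bool" where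
  "gate_in N (Had j) = (j \<in> N)" | "gate_in N (Phs j) = (j \<in> N)"
| "gate_in N (CNOT c t) = (c \<in> N \<and> t \<in> N)"

lemma gate_supp: "supported_on N u \<Longrightarrow> gate_in N g \<Longrightarrow> supported_on N (conj_gate g u)"
  by (cases u; cases g) (auto simp: supported_on_def)

lemma circ_supp: "supported_on N u \<Longrightarrow> \<forall>g\<in>set C. gate_in N g \<Longrightarrow> supported_on N (conj_circ C u)"
  by (induction C arbitrary: u) (auto simp: gate_supp)

lemma stage_gates:
  assumes "finite Q" "i \<in> Q"
  shows "\<forall>g\<in>set (stage_circuit Q vw i). gate_in Q g \<and> good g"
  using assms by (auto simp: stage_circuit_def step1_gates_def step2_gates_def split: if_splits)

lemma cnot_count_append: "cnot_count (C @ D) = cnot_count C + cnot_count D"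
  by (simp add: cnot_count_def)

lemma stage_cnot:
  assumes "finite Q" "i \<in> Q" "fst vw i \<noteq> 0 \<or> snd vw i \<noteq> 0"
  shows "cnot_count (stage_circuit Q vw i) + 1 = symp_weight Q vw"
proof -
  have 1: "cnot_count (step1_gates Q vw) = 0"
    by (auto simp: cnot_count_def step1_gates_def filter_concat intro!: sum_list_eq_0_iff[THEN iffD2])
  define L where "L = filter (\<lambda>j. j \<noteq> i \<and> (fst vw j \<noteq> 0 \<or> snd vw j \<noteq> 0)) (sorted_list_of_set Q)"
  have 2: "cnot_count (step2_gates Q vw i) = length L"
    by (simp add: cnot_count_def step2_gates_def L_def filter_map comp_def)
  have "length L = card (set L)" by (metis L_def distinct_card distinct_filter distinct_sorted_list_of_set)
  also have "set L = {j\<in>Q. fst vw j \<noteq> 0 \<or> snd vw j \<noteq> 0} - {i}" using assms(1) by (auto simp: L_def)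
  finally have eq: "length L = card ({j\<in>Q. fst vw j \<noteq> 0 \<or> snd vw j \<noteq> 0} - {i})" .
  have "Suc (card ({j\<in>Q. fst vw j \<noteq> 0 \<or> snd vw j \<noteq> 0} - {i})) = card {j\<in>Q. fst vw j \<noteq> 0 \<or> snd vw j \<noteq> 0}"
    using assms by (intro card_Suc_Diff1) auto
  then have "length L + 1 = symp_weight Q vw" unfolding symp_weight_def eq by simp
  then show ?thesis using 1 2 by (simp add: stage_circuit_def cnot_count_append)
qed



definition s1x :: "bit \<Rightarrow> bit \<Rightarrow> bit \<Rightarrow> bit \<Rightarrow> bit" where
  "s1x v w x z = (if v = 0 \<and> w = 1 then z else if v = 1 \<and> w = 1 then z + x else x)"
definition s1z :: "bit \<Rightarrow> bit \<Rightarrow> bit \<Rightarrow> bit \<Rightarrow> bit" where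
  "s1z v w x z = (if w = 1 then x else z)"

definition G :: "pauli \<Rightarrow> nat \<Rightarrow> gate list" where
  "G vw j = (if fst vw j = 0 \<and> snd vw j = 1 then [Had j]
      else if fst vw j = 1 \<and> snd vw j = 1 then [Phs j, Had j] else [])"

lemma G_eff: "conj_circ (G vw j) (x, z) =
   (x(j := s1x (fst vw j) (snd vw j) (x j) (z j)), z(j := s1z (fst vw j) (snd vw j) (x j) (z j)))"
  by (cases "fst vw j"; cases "snd vw j") (auto simp: G_def s1x_def s1z_def fun_eq_iff)

lemma step1_eff: "distinct L \<Longrightarrow> conj_circ (concat (map (G vw) L)) (x, z) =
   (\<lambda>k. if k \<in> set L then s1x (fst vw k) (snd vw k) (x k) (z k) else x k,
    \<lambda>k. if k \<in> set L then s1z (fst vw k) (snd vw k) (x k) (z k) else z k)"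
proof (induction L arbitrary: x z)
  case Nil then show ?case by simp
next
  case (Cons a L)
  have d: "distinct L" "a \<notin> set L" using Cons.prems by auto
  show ?case using d by (auto simp: G_eff Cons.IH[OF d(1)] fun_eq_iff)
qed

lemma step1_gates_G: "step1_gates Q vw = concat (map (G vw) (sorted_list_of_set Q))"
  by (simp add: step1_gates_def G_def[abs_def])

lemma fst_cnot: "fst (conj_gate (CNOT c t) u) = (fst u)(t := fst u t + fst u c)"
  by (cases u) simp

lemma step2_eff: "distinct L \<Longrightarrow> i \<notin> set L \<Longrightarrow>
  fst (conj_circ (map (\<lambda>j. CNOT j i) L) u) = (fst u)(i := fst u i + (\<Sum>j\<in>set L. fst u j))"
proof (induction L arbitrary: u)
  case Nil then show ?case by simp
next
  case (Cons a L)
  let ?u = "conj_gate (CNOT a i) u"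
  have "fst (conj_circ (map (\<lambda>j. CNOT j i) (a # L)) u) = fst (conj_circ (map (\<lambda>j. CNOT j i) L) ?u)"
    by simp
  also have "\<dots> = (fst ?u)(i := fst ?u i + (\<Sum>j\<in>set L. fst ?u j))" using Cons by auto
  also have "(\<Sum>j\<in>set L. fst ?u j) = (\<Sum>j\<in>set L. fst u j)"
    using Cons.prems by (intro sum.cong) (auto simp: fst_cnot)
  finally show ?case using Cons.prems by (auto simp: fst_cnot add.assoc fun_eq_iff)
qed

lemma null_vsum:
  assumes "\<forall>t\<in>A. (\<Sum>j\<in>Q. fst t j * v j + snd t j * w j) = 0"
  shows "(\<Sum>j\<in>Q. fst (vsum A) j * v j + snd (vsum A) j * w j) = 0"
proof -
  have "(\<Sum>j\<in>Q. fst (vsum A) j * v j + snd (vsum A) j * w j) =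
        (\<Sum>j\<in>Q. \<Sum>t\<in>A. fst t j * v j + snd t j * w j)"
    by (simp add: vsum_def sum_distrib_right sum.distrib)
  also have "\<dots> = (\<Sum>t\<in>A. \<Sum>j\<in>Q. fst t j * v j + snd t j * w j)" by (rule sum.swap)
  also have "\<dots> = 0" using assms by simp
  finally show ?thesis .
qed

lemma s1x_supp: "v \<noteq> 0 \<or> w \<noteq> 0 \<Longrightarrow> s1x v w x z = x * v + z * w"
  by (cases v; cases w) (simp_all add: s1x_def add.commute)

lemma stage_diag:
  assumes Q: "Q = remaining P" "finite Q"
    and T: "indep_gen_set T (restrict_to Q ` P)" and nul: "tableau_null Q T vw"
    and i: "i \<in> Q" "fst vw i \<noteq> 0 \<or> snd vw i \<noteq> 0"
    and u: "u \<in> P" and k: "k \<notin> Q - {i}"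
  shows "fst (conj_circ (stage_circuit Q vw i) u) k = 0"
proof -
  obtain x z where uxz: "u = (x, z)" by (cases u)
  define x1 where "x1 = (\<lambda>k. if k \<in> Q then s1x (fst vw k) (snd vw k) (x k) (z k) else x k)"
  have c1: "fst (conj_circ (step1_gates Q vw) u) = x1"
    using Q(2) by (simp add: step1_gates_G uxz step1_eff x1_def)
  define supp where "supp = {j\<in>Q. fst vw j \<noteq> 0 \<or> snd vw j \<noteq> 0}"
  define L where "L = filter (\<lambda>j. j \<noteq> i \<and> (fst vw j \<noteq> 0 \<or> snd vw j \<noteq> 0)) (sorted_list_of_set Q)"
  have L: "distinct L" "i \<notin> set L" "set L = supp - {i}" using Q(2) by (auto simp: L_def supp_def)
  have s2: "step2_gates Q vw i = map (\<lambda>j. CNOT j i) L" by (simp add: step2_gates_def L_def)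
  have fin: "fst (conj_circ (stage_circuit Q vw i) u) = x1(i := x1 i + (\<Sum>j\<in>supp - {i}. x1 j))"
    unfolding stage_circuit_def conj_circ_append s2 using step2_eff[OF L(1,2)] c1 L(3) by simp
  show ?thesis
  proof (cases "k = i")
    case False
    then have "k \<notin> Q" using k by auto
    then have "x k = 0" using u Q(1) uxz by (auto simp: remaining_def)
    then show ?thesis using fin False \<open>k \<notin> Q\<close> by (simp add: x1_def)
  next
    case True
    have fs: "finite supp" using Q(2) by (simp add: supp_def)
    have iS: "i \<in> supp" using i by (simp add: supp_def)
    have "x1 i + (\<Sum>j\<in>supp - {i}. x1 j) = (\<Sum>j\<in>supp. x1 j)"
      using sum.remove[OF fs iS, of x1] by simp
    also have "\<dots> = (\<Sum>j\<in>supp. x j * fst vw j + z j * snd vw j)"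
      by (intro sum.cong) (auto simp: supp_def x1_def s1x_supp)
    also have "\<dots> = (\<Sum>j\<in>Q. x j * fst vw j + z j * snd vw j)"
      using Q(2) by (intro sum.mono_neutral_left) (auto simp: supp_def)
    also have "\<dots> = 0"
    proof -
      have "restrict_to Q u \<in> f2_span T" using T u span_base[of "restrict_to Q u" "restrict_to Q ` P"]
        by (auto simp: indep_gen_set_def)
      then obtain A where A: "finite A" "A \<subseteq> T" "restrict_to Q u = vsum A" unfolding f2_span_def by auto
      have "(\<Sum>j\<in>Q. fst (vsum A) j * fst vw j + snd (vsum A) j * snd vw j) = 0"
        using nul A(2) by (intro null_vsum) (auto simp: tableau_null_def)
      moreover have "(\<Sum>j\<in>Q. fst (vsum A) j * fst vw j + snd (vsum A) j * snd vw j) =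
                     (\<Sum>j\<in>Q. x j * fst vw j + z j * snd vw j)"
        unfolding A(3)[symmetric] by (intro sum.cong) (auto simp: restrict_to_def uxz)
      ultimately show ?thesis by simp
    qed
    finally show ?thesis using fin True by simp
  qed
qed



lemma stage_remaining:
  assumes Q: "Q = remaining P" "finite Q"
    and T: "indep_gen_set T (restrict_to Q ` P)" and nul: "tableau_null Q T vw"
    and i: "i \<in> Q" "fst vw i \<noteq> 0 \<or> snd vw i \<noteq> 0"
  shows "remaining (conj_circ (stage_circuit Q vw i) ` P) \<subseteq> Q - {i}"
proof
  fix k assume "k \<in> remaining (conj_circ (stage_circuit Q vw i) ` P)"
  then obtain u where u: "u \<in> P" "fst (conj_circ (stage_circuit Q vw i) u) k \<noteq> 0"
    unfolding remaining_def by auto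
  show "k \<in> Q - {i}"
  proof (rule ccontr)
    assume "k \<notin> Q - {i}"
    from stage_diag[OF Q T nul i u(1) this] u(2) show False by simp
  qed
qed

definition gsum :: "nat \<Rightarrow> nat \<Rightarrow> nat" where
  "gsum m r = (\<Sum>k<m. min r k)"

lemma gsum_mono: "m \<le> m' \<Longrightarrow> r \<le> r' \<Longrightarrow> gsum m r \<le> gsum m' r'"
proof -
  assume a: "m \<le> m'" "r \<le> r'"
  have "gsum m r \<le> (\<Sum>k<m. min r' k)" unfolding gsum_def using a by (intro sum_mono) auto
  also have "\<dots> \<le> gsum m' r'" unfolding gsum_def using a by (intro sum_mono2) auto
  finally show ?thesis .
qed

lemma gsum_Suc: "gsum (Suc m) r = gsum m r + min r m"
  by (simp add: gsum_def)

lemma run_bound: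
  assumes "qwd_run P C"
  shows "finite (remaining P) \<Longrightarrow> finite S \<Longrightarrow> P \<subseteq> f2_span S \<Longrightarrow>
         cnot_count C \<le> gsum (card (remaining P)) (card S)"
  using assms
proof (induction arbitrary: S rule: qwd_run.induct)
  case (stop P)
  then show ?case by (simp add: cnot_count_def)
next
  case (stage Q P T vw i C)
  let ?F = "conj_circ (stage_circuit Q vw i)"
  have fQ: "finite Q" using stage.prems(1) stage.hyps(1) by simp
  have rem: "remaining (?F ` P) \<subseteq> Q - {i}"
    using stage_remaining[OF stage.hyps(1) fQ stage.hyps(4) stage.hyps(7) stage.hyps(9) stage.hyps(10)] .
  have frem: "finite (remaining (?F ` P))" using rem fQ by (auto intro: finite_subset)
  have crem: "card (remaining (?F ` P)) \<le> card Q - 1"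
    using card_mono[OF _ rem] fQ stage.hyps(9) by simp
  have fS': "finite (?F ` S)" using stage.prems(2) by simp
  have PS': "?F ` P \<subseteq> f2_span (?F ` S)"
    using lin_span_image[OF conj_circ_lin, of "stage_circuit Q vw i" S] stage.prems(3) by blast
  have IH: "cnot_count C \<le> gsum (card (remaining (?F ` P))) (card (?F ` S))"
    using stage.IH[OF frem fS' PS'] .
  also have "\<dots> \<le> gsum (card Q - 1) (card S)"
    using crem card_image_le[OF stage.prems(2)] by (intro gsum_mono) auto
  finally have c2: "cnot_count C \<le> gsum (card Q - 1) (card S)" .
  have cs: "cnot_count (stage_circuit Q vw i) + 1 = symp_weight Q vw"
    using stage_cnot[OF fQ stage.hyps(9) stage.hyps(10)] .
  have "symp_weight Q vw \<le> card Q" unfolding symp_weight_def using fQ by (intro card_mono) auto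
  have "restrict_to Q ` P \<subseteq> f2_span (restrict_to Q ` S)"
    using lin_span_image[OF restrict_lin, of Q S] stage.prems(3) by blast
  then have "f2_span (restrict_to Q ` P) \<subseteq> f2_span (restrict_to Q ` S)" by (rule span_subset)
  moreover have "T \<subseteq> f2_span T" using span_base by blast
  ultimately have "T \<subseteq> f2_span (restrict_to Q ` S)" using stage.hyps(4) by (auto simp: indep_gen_set_def)
  then have "card T \<le> card (restrict_to Q ` S)"
    using stage.hyps(4) stage.prems(2) by (intro card_indep_le) (auto simp: indep_gen_set_def)
  also have "\<dots> \<le> card S" using card_image_le[OF stage.prems(2)] .
  finally have "card T \<le> card S" .
  then have c1: "cnot_count (stage_circuit Q vw i) \<le> min (card S) (card Q - 1)"
    using cs stage.hyps(8) \<open>symp_weight Q vw \<le> card Q\<close> by simp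
  have "card Q \<noteq> 0" using fQ stage.hyps(9) by auto
  then have g: "gsum (card Q) (card S) = gsum (card Q - 1) (card S) + min (card S) (card Q - 1)"
    by (metis Suc_pred' gsum_Suc not_gr0)
  have "cnot_count (stage_circuit Q vw i @ C) \<le> min (card S) (card Q - 1) + gsum (card Q - 1) (card S)"
    by (simp only: cnot_count_append) (rule add_mono[OF c1 c2])
  also have "\<dots> = gsum (card Q) (card S)" using g by simp
  finally show ?case using stage.hyps(1) by simp
qed

lemma gate_in_mono: "gate_in N g \<Longrightarrow> N \<subseteq> M \<Longrightarrow> gate_in M g"
  by (cases g) auto

lemma run_final:
  assumes "qwd_run P C"
  shows "(\<forall>u\<in>P. supported_on {..<n} u) \<Longrightarrow> (\<forall>g\<in>set C. good g) \<and>
    (\<forall>u\<in>P. supported_on {..<n} (conj_circ C u) \<and> fst (conj_circ C u) = (\<lambda>_. 0))"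
  using assms
proof (induction rule: qwd_run.induct)
  case (stop P)
  then show ?case by (auto simp: remaining_def fun_eq_iff)
next
  case (stage Q P T vw i C)
  let ?F = "conj_circ (stage_circuit Q vw i)"
  have Qn: "Q \<subseteq> {..<n}"
  proof
    fix j assume "j \<in> Q"
    then obtain u where "u \<in> P" "fst u j \<noteq> 0" using stage.hyps(1) by (auto simp: remaining_def)
    then show "j \<in> {..<n}" using stage.prems unfolding supported_on_def by (meson lessThan_iff)
  qed
  have fQ: "finite Q" using Qn by (auto intro: finite_subset)
  have gs: "\<forall>g\<in>set (stage_circuit Q vw i). gate_in {..<n} g \<and> good g"
    using stage_gates[OF fQ stage.hyps(9)] Qn gate_in_mono by blast
  have sup: "\<forall>u\<in>?F ` P. supported_on {..<n} u"
    using gs stage.prems circ_supp by blast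
  have IH: "(\<forall>g\<in>set C. good g) \<and>
    (\<forall>u\<in>?F ` P. supported_on {..<n} (conj_circ C u) \<and> fst (conj_circ C u) = (\<lambda>_. 0))"
    using stage.IH sup by blast
  show ?case using IH gs by auto
qed

definition ez :: "nat \<Rightarrow> pauli" where
  "ez j = (\<lambda>_. 0, \<lambda>k. if k = j then 1 else 0)"

lemma diag_in_span:
  assumes "fst u = (\<lambda>_. 0)" "supported_on {..<n} u"
  shows "u \<in> f2_span (ez ` {..<n})"
proof -
  define J where "J = {j. j < n \<and> snd u j = 1}"
  have injE: "inj_on ez J" by (rule inj_onI) (auto simp: ez_def fun_eq_iff split: if_splits)
  have fJ: "finite J" by (simp add: J_def)
  have "vsum (ez ` J) = u"
  proof -
    have 1: "(\<lambda>j. \<Sum>y\<in>ez ` J. fst y j) = fst u" using assms(1)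
      by (auto simp: ez_def fun_eq_iff intro!: sum.neutral)
    have 2: "(\<lambda>k. \<Sum>y\<in>ez ` J. snd y k) = snd u"
    proof
      fix k
      have "(\<Sum>y\<in>ez ` J. snd y k) = (\<Sum>j\<in>J. snd (ez j) k)" by (rule sum.reindex[OF injE, unfolded comp_def])
      also have "\<dots> = (\<Sum>j\<in>J. if k = j then 1 else 0)" by (simp add: ez_def)
      also have "\<dots> = (if k \<in> J then 1 else 0)" using fJ by (simp add: sum.delta)
      also have "\<dots> = snd u k" using assms(2) by (cases "snd u k") (auto simp: J_def supported_on_def)
      finally show "(\<Sum>y\<in>ez ` J. snd y k) = snd u k" .
    qed
    show ?thesis unfolding vsum_def 1 2 by simp
  qed
  moreover have "ez ` J \<subseteq> ez ` {..<n}" by (auto simp: J_def)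
  ultimately show ?thesis unfolding f2_span_def using fJ by blast
qed

lemma r_le_n:
  assumes on_n: "\<forall>u\<in>P. supported_on {..<n} u"
    and gens: "indep_gen_set T P" and run: "qwd_run P C"
  shows "card T \<le> n"
proof -
  let ?F = "conj_circ C"
  from run_final[OF run on_n]
  have gd: "\<forall>g\<in>set C. good g" and fin: "\<forall>u\<in>P. supported_on {..<n} (?F u) \<and> fst (?F u) = (\<lambda>_. 0)"
    by auto
  have inj: "inj ?F" by (rule circ_inj[OF gd])
  have ind: "f2_indep T" using gens by (simp add: indep_gen_set_def)
  have "T \<subseteq> f2_span P" using gens span_base[of _ T] by (auto simp: indep_gen_set_def)
  then have "?F ` T \<subseteq> f2_span (?F ` P)" using lin_span_image[OF conj_circ_lin, of C P] by blast
  moreover have "?F ` P \<subseteq> f2_span (ez ` {..<n})" using fin diag_in_span by blast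
  ultimately have sub: "?F ` T \<subseteq> f2_span (ez ` {..<n})" using span_subset by blast
  have "card (?F ` T) \<le> card (ez ` {..<n})"
    by (rule card_indep_le[OF indep_image[OF conj_circ_lin inj ind] _ sub]) simp
  also have "\<dots> \<le> n" using card_image_le[of "{..<n}" ez] by simp
  finally show ?thesis using card_image[OF inj_on_subset[OF inj]] by (metis subset_UNIV)
qed

lemma gsum_formula: "r \<le> n \<Longrightarrow> 2 * gsum n r + r * (r + 1) = 2 * n * r"
proof (induction n arbitrary: r)
  case 0 then show ?case by (simp add: gsum_def)
next
  case (Suc n)
  show ?case
  proof (cases "r \<le> n")
    case True
    then show ?thesis using Suc.IH[OF True] by (simp add: gsum_Suc algebra_simps)
  next
    case False
    then have r: "r = Suc n" using Suc.prems by simp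
    have "gsum n (Suc n) = gsum n n" unfolding gsum_def by (intro sum.cong) auto
    then have e: "gsum (Suc n) (Suc n) = gsum n n + n" by (simp add: gsum_Suc)
    have ih: "2 * gsum n n + n * (n + 1) = 2 * n * n" using Suc.IH[of n] by simp
    have "2 * gsum (Suc n) (Suc n) + Suc n * (Suc n + 1) = (2 * gsum n n + n * (n + 1)) + 4 * n + 2"
      unfolding e by (simp add: algebra_simps)
    also have "\<dots> = 2 * Suc n * Suc n" unfolding ih by (simp add: algebra_simps)
    finally show ?thesis unfolding r .
  qed
qed


theorem theorem1:
  fixes n r :: nat and P T :: "pauli set" and C :: "gate list"
  assumes on_n: "\<forall>u\<in>P. supported_on {..<n} u"
    and commuting: "\<forall>u\<in>P. \<forall>u'\<in>P. symp n u u' = 0"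
    and gens: "indep_gen_set T P" and r_def: "r = card T"
    and run: "qwd_run P C"
  shows "real (cnot_count C) \<le> real n * real r - real r * (real r + 1) / 2"
proof -
  have remn: "remaining P \<subseteq> {..<n}"
  proof
    fix j assume "j \<in> remaining P"
    then obtain u where "u \<in> P" "fst u j \<noteq> 0" by (auto simp: remaining_def)
    then show "j \<in> {..<n}" using on_n unfolding supported_on_def by (meson lessThan_iff)
  qed
  have fr: "finite (remaining P)" using remn by (auto intro: finite_subset)
  have cr: "card (remaining P) \<le> n" using card_mono[OF _ remn] by simp
  have fT: "finite T" using gens by (simp add: indep_gen_set_def f2_indep_def)
  have PS: "P \<subseteq> f2_span T" using gens span_base[of _ P] by (auto simp: indep_gen_set_def)
  have "cnot_count C \<le> gsum (card (remaining P)) (card T)" by (rule run_bound[OF run fr fT PS])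
  also have "\<dots> \<le> gsum n r" using cr r_def by (intro gsum_mono) auto
  finally have b: "cnot_count C \<le> gsum n r" .
  have rn: "r \<le> n" using r_le_n[OF on_n gens run] r_def by simp
  have "real (2 * gsum n r + r * (r + 1)) = real (2 * n * r)" using gsum_formula[OF rn] by simp
  then have f: "2 * real (gsum n r) + real r * (real r + 1) = 2 * real n * real r" by (simp add: algebra_simps)
  have "real (cnot_count C) \<le> real (gsum n r)" using b by simp
  then show ?thesis using f by (simp add: field_simps)
qed

end
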